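(* Let $G=(V,E)$ be a finite simple graph. If the graphic matroid of $G$ has a rainbow circuit-free coloring in which each color is used at most twice, then $G$ is $(2,3)$-sparse.
   Context: The graphic matroid of $G$ has ground set $E$, independent sets being the edge sets of forests; its circuits are the edge sets of cycles. A coloring of $E$ is a partition into nonempty color classes; it is rainbow circuit-free if no cycle of $G$ has all its edges of pairwise different colors. $G$ is $(2,3)$-sparse if $|E[X]|\leq 2|X|-3$ for every $X\subseteq V$ with $|X|\geq 2$, where $E[X]$ is the set of edges with both endpoints in $X$. *)

theory Defs
  imports Main "HOL-Library.Disjoint_Sets"
begin

definition simple_graph :: "'a set \<Rightarrow> 'a set set \<Rightarrow> bool" where
  "simple_graph V E \<longleftrightarrow> finite V \<and>
     (\<forall>e\<in>E. \<exists>u v. u \<noteq> v \<and> u \<in> V \<and> v \<in> V \<and> e = {u, v})"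

definition is_cycle :: "'a set set \<Rightarrow> 'a list \<Rightarrow> bool" where
  "is_cycle E vs \<longleftrightarrow> length vs \<ge> 3 \<and> distinct vs \<and>
     (\<forall>i < length vs. {vs ! i, vs ! ((i + 1) mod length vs)} \<in> E)"

definition cycle_edges :: "'a list \<Rightarrow> 'a set set" where
  "cycle_edges vs = {{vs ! i, vs ! ((i + 1) mod length vs)} | i. i < length vs}"

definition graphic_circuit :: "'a set set \<Rightarrow> 'a set set \<Rightarrow> bool" where
  "graphic_circuit E C \<longleftrightarrow> (\<exists>vs. is_cycle E vs \<and> C = cycle_edges vs)"

text \<open>A coloring is a partition P of E into nonempty color classes. It is rainbow
  circuit-free if no circuit has all its edges of pairwise different colors.\<close>
definition rainbow_circuit_free :: "'a set set \<Rightarrow> 'a set set set \<Rightarrow> bool" where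
  "rainbow_circuit_free E P \<longleftrightarrow>
     \<not> (\<exists>C. graphic_circuit E C \<and> (\<forall>X\<in>P. card (C \<inter> X) \<le> 1))"

definition sparse23 :: "'a set \<Rightarrow> 'a set set \<Rightarrow> bool" where
  "sparse23 V E \<longleftrightarrow> (\<forall>X. X \<subseteq> V \<and> card X \<ge> 2 \<longrightarrow>
     card {e\<in>E. e \<subseteq> X} \<le> 2 * card X - 3)"

end

theory Submission
  imports Defs
begin

definition pth :: "'a set set \<Rightarrow> 'a set \<Rightarrow> 'a list \<Rightarrow> bool" where
  "pth S Y ps \<longleftrightarrow> distinct ps \<and> set ps \<subseteq> Y \<and>
     (\<forall>i. Suc i < length ps \<longrightarrow> {ps ! i, ps ! Suc i} \<in> S)"

lemma is_cycle_mono: "is_cycle S vs \<Longrightarrow> S \<subseteq> T \<Longrightarrow> is_cycle T vs"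
  unfolding is_cycle_def by blast

lemma cycle_edges_sub: "is_cycle S vs \<Longrightarrow> cycle_edges vs \<subseteq> S"
  unfolding is_cycle_def cycle_edges_def by blast

lemma cycle_from_mindeg:
  assumes fin: "finite Y"
    and edges: "\<forall>e\<in>S. \<exists>u v. u \<noteq> v \<and> u \<in> Y \<and> v \<in> Y \<and> e = {u, v}"
    and ne: "Y \<noteq> {}"
    and deg: "\<forall>x\<in>Y. \<exists>a b. a \<noteq> b \<and> {x, a} \<in> S \<and> {x, b} \<in> S \<and> a \<noteq> x \<and> b \<noteq> x"
  shows "\<exists>vs. is_cycle S vs"
proof -
  obtain y0 where y0: "y0 \<in> Y" using ne by blast
  have p0: "pth S Y [y0]" using y0 unfolding pth_def by auto
  have bnd: "\<forall>qs. pth S Y qs \<longrightarrow> length qs < Suc (card Y)"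
  proof (intro allI impI)
    fix qs assume "pth S Y qs"
    then have "distinct qs" "set qs \<subseteq> Y" unfolding pth_def by auto
    then have "length qs \<le> card Y" using fin by (metis card_mono distinct_card)
    then show "length qs < Suc (card Y)" by simp
  qed
  obtain ps where ps: "pth S Y ps" and mx: "\<forall>qs. pth S Y qs \<longrightarrow> length qs \<le> length ps"
    using ex_has_greatest_nat[of "pth S Y" "[y0]" length "Suc (card Y)"] p0 bnd by blast
  have len: "length ps \<ge> 1" using mx p0 by fastforce
  define x where "x = ps ! 0"
  have xY: "x \<in> Y" using ps len unfolding pth_def x_def
    by (metis One_nat_def Suc_le_lessD nth_mem subsetD)
  obtain a b where ab: "a \<noteq> b" "{x, a} \<in> S" "{x, b} \<in> S" "a \<noteq> x" "b \<noteq> x"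
    using deg xY by blast
  have inps: "c \<in> set ps" if c: "{x, c} \<in> S" "c \<noteq> x" for c
  proof (rule ccontr)
    assume nin: "c \<notin> set ps"
    obtain u v where uv: "u \<in> Y" "v \<in> Y" "{x, c} = {u, v}" using edges c(1) by metis
    have "c \<in> {u, v}" using uv(3) by (metis insertI1 insert_commute)
    then have cY: "c \<in> Y" using uv by auto
    have "pth S Y (c # ps)"
      unfolding pth_def
    proof (intro conjI allI impI)
      show "distinct (c # ps)" using ps nin unfolding pth_def by auto
      show "set (c # ps) \<subseteq> Y" using ps cY unfolding pth_def by auto
      fix i assume i: "Suc i < length (c # ps)"
      show "{(c # ps) ! i, (c # ps) ! Suc i} \<in> S"
      proof (cases i)
        case 0
        then show ?thesis using c(1) x_def by (simp add: insert_commute)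
      next
        case (Suc j)
        then show ?thesis using ps i unfolding pth_def by auto
      qed
    qed
    then have "length (c # ps) \<le> length ps" using mx by blast
    then show False by simp
  qed
  obtain ja where ja: "ja < length ps" "ps ! ja = a"
    using inps[OF ab(2) ab(4)] by (meson in_set_conv_nth)
  obtain jb where jb: "jb < length ps" "ps ! jb = b"
    using inps[OF ab(3) ab(5)] by (meson in_set_conv_nth)
  have "ja \<noteq> 0"
  proof
    assume "ja = 0" then show False using ja(2) ab(4) x_def by simp
  qed
  moreover have "jb \<noteq> 0"
  proof
    assume "jb = 0" then show False using jb(2) ab(5) x_def by simp
  qed
  moreover have "ja \<noteq> jb" using ja jb ab by auto
  ultimately obtain j where j: "2 \<le> j" "j < length ps" "{x, ps ! j} \<in> S"
    using ja jb ab
    by (metis One_nat_def Suc_1 Suc_leI less_one linorder_neqE_nat not_less_eq)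
  define vs where "vs = take (Suc j) ps"
  have lvs: "length vs = Suc j" using j unfolding vs_def by simp
  have "is_cycle S vs"
    unfolding is_cycle_def
  proof (intro conjI allI impI)
    show "3 \<le> length vs" using lvs j by simp
    show "distinct vs" using ps unfolding vs_def pth_def by simp
    fix i assume i: "i < length vs"
    show "{vs ! i, vs ! ((i + 1) mod length vs)} \<in> S"
    proof (cases "i < j")
      case True
      then have "(i + 1) mod length vs = Suc i" using lvs by simp
      moreover have "vs ! i = ps ! i" "vs ! Suc i = ps ! Suc i"
        using True unfolding vs_def by auto
      ultimately show ?thesis using ps True j unfolding pth_def by auto
    next
      case False
      then have "i = j" using i lvs by simp
      then have "(i + 1) mod length vs = 0" using lvs by simp
      moreover have "vs ! i = ps ! j" "vs ! 0 = x"
        using \<open>i = j\<close> unfolding vs_def x_def by auto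
      ultimately show ?thesis using j by (simp add: insert_commute)
    qed
  qed
  then show ?thesis by blast
qed

lemma edges_finite:
  assumes "finite Y" "\<forall>e\<in>S. \<exists>u v. u \<noteq> v \<and> u \<in> Y \<and> v \<in> Y \<and> e = {u, v}"
  shows "finite S"
proof -
  have "S \<subseteq> Pow Y"
  proof
    fix e assume "e \<in> S"
    then obtain u v where "u \<in> Y" "v \<in> Y" "e = {u, v}" using assms(2) by blast
    then show "e \<in> Pow Y" by simp
  qed
  moreover have "finite (Pow Y)" using assms(1) by simp
  ultimately show ?thesis by (rule finite_subset)
qed

lemma cycle_exists:
  assumes "finite Y"
    and "\<forall>e\<in>S. \<exists>u v. u \<noteq> v \<and> u \<in> Y \<and> v \<in> Y \<and> e = {u, v}"
    and "S \<noteq> {}" and "card Y \<le> card S"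
  shows "\<exists>vs. is_cycle S vs"
  using assms
proof (induction "card Y" arbitrary: Y S rule: less_induct)
  case less
  note fin = less.prems(1) and edges = less.prems(2)
  have finS: "finite S" using edges_finite[OF fin edges] .
  show ?case
  proof (cases "\<forall>x\<in>Y. \<exists>a b. a \<noteq> b \<and> {x, a} \<in> S \<and> {x, b} \<in> S \<and> a \<noteq> x \<and> b \<noteq> x")
    case True
    have "Y \<noteq> {}" using less.prems(3) edges by blast
    then show ?thesis using cycle_from_mindeg[OF fin edges _ True] by blast
  next
    case False
    then obtain y where yY: "y \<in> Y" and
      nd: "\<not> (\<exists>a b. a \<noteq> b \<and> {y, a} \<in> S \<and> {y, b} \<in> S \<and> a \<noteq> y \<and> b \<noteq> y)" by blast
    define S' where "S' = {e\<in>S. y \<notin> e}"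
    define D where "D = {e\<in>S. y \<in> e}"
    have SU: "S = S' \<union> D" unfolding S'_def D_def by blast
    have "card D \<le> Suc 0"
    proof -
      have "finite D" using finS unfolding D_def by simp
      moreover have "\<forall>e1\<in>D. \<forall>e2\<in>D. e1 = e2"
      proof (intro ballI)
        fix e1 e2 assume e1: "e1 \<in> D" and e2: "e2 \<in> D"
        obtain u1 v1 where 1: "u1 \<noteq> v1" "e1 = {u1, v1}" using e1 edges unfolding D_def by blast
        obtain u2 v2 where 2: "u2 \<noteq> v2" "e2 = {u2, v2}" using e2 edges unfolding D_def by blast
        have y1: "y \<in> {u1, v1}" using e1 1 unfolding D_def by simp
        define a where "a = (if y = u1 then v1 else u1)"
        have a: "e1 = {y, a}" "a \<noteq> y" using 1 y1 unfolding a_def by auto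
        have y2: "y \<in> {u2, v2}" using e2 2 unfolding D_def by simp
        define b where "b = (if y = u2 then v2 else u2)"
        have b: "e2 = {y, b}" "b \<noteq> y" using 2 y2 unfolding b_def by auto
        have "{y, a} \<in> S" "{y, b} \<in> S" using a b e1 e2 unfolding D_def by auto
        then have "a = b" using nd a(2) b(2) by blast
        then show "e1 = e2" using a b by simp
      qed
      ultimately show ?thesis using card_le_Suc0_iff_eq by blast
    qed
    have "card S \<le> card S' + card D" using SU card_Un_le by metis
    have cY: "card Y = Suc (card (Y - {y}))" using fin yY by (metis card_Suc_Diff1)
    have edges': "\<forall>e\<in>S'. \<exists>u v. u \<noteq> v \<and> u \<in> Y - {y} \<and> v \<in> Y - {y} \<and> e = {u, v}"
    proof
      fix e assume e: "e \<in> S'"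
      then obtain u v where "u \<noteq> v" "u \<in> Y" "v \<in> Y" "e = {u, v}" using edges unfolding S'_def by blast
      moreover have "y \<notin> e" using e unfolding S'_def by simp
      ultimately show "\<exists>u v. u \<noteq> v \<and> u \<in> Y - {y} \<and> v \<in> Y - {y} \<and> e = {u, v}" by blast
    qed
    have cle: "card (Y - {y}) \<le> card S'"
      using \<open>card S \<le> card S' + card D\<close> \<open>card D \<le> Suc 0\<close> cY less.prems(4) by linarith
    have "S' \<noteq> {}"
    proof
      assume "S' = {}"
      then have "card S \<le> 1" using \<open>card S \<le> card S' + card D\<close> \<open>card D \<le> Suc 0\<close> by simp
      obtain e where "e \<in> S" using less.prems(3) by blast
      then obtain u v where "u \<noteq> v" "u \<in> Y" "v \<in> Y" using edges by blast
      then have "card {u, v} \<le> card Y" using fin by (intro card_mono) auto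
      then have "card Y \<ge> 2" using \<open>u \<noteq> v\<close> by simp
      then show False using \<open>card S \<le> 1\<close> less.prems(4) by linarith
    qed
    have "card (Y - {y}) < card Y" using cY by simp
    then obtain vs where "is_cycle S' vs"
      using less.hyps[of "Y - {y}" S', OF _ _ edges' \<open>S' \<noteq> {}\<close> cle] fin by blast
    moreover have "S' \<subseteq> S" unfolding S'_def by blast
    ultimately show ?thesis using is_cycle_mono by blast
  qed
qed

lemma transversal:
  assumes "partition_on E P" "Q \<subseteq> P" "finite Q" "\<forall>C\<in>Q. C \<inter> Z \<noteq> {}"
  shows "\<exists>S. S \<subseteq> Z \<and> S \<subseteq> E \<and> finite S \<and> card S = card Q \<and> (\<forall>C\<in>P. card (S \<inter> C) \<le> 1)"
proof -
  define f where "f C = (SOME e. e \<in> C \<inter> Z)" for C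
  have f: "f C \<in> C \<inter> Z" if "C \<in> Q" for C
    unfolding f_def using assms(4) that by (metis all_not_in_conv someI_ex)
  have disj: "C1 = C2" if "C1 \<in> P" "C2 \<in> P" "e \<in> C1" "e \<in> C2" for C1 C2 e
    using partition_onD2[OF assms(1)] that disjointD by blast
  have inj: "inj_on f Q"
    by (rule inj_onI) (metis IntE assms(2) disj f subsetD)
  define S where "S = f ` Q"
  have "S \<subseteq> Z" using f unfolding S_def by blast
  moreover have "S \<subseteq> E" using f assms(1,2) partition_onD1 unfolding S_def by blast
  moreover have "finite S" using assms(3) unfolding S_def by simp
  moreover have "card S = card Q" using inj unfolding S_def by (simp add: card_image)
  moreover have "\<forall>C\<in>P. card (S \<inter> C) \<le> 1"
  proof
    fix C assume C: "C \<in> P"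
    have "\<forall>a1\<in>S \<inter> C. \<forall>a2\<in>S \<inter> C. a1 = a2"
      unfolding S_def using f disj C assms(2) by (metis IntE image_iff subsetD)
    then show "card (S \<inter> C) \<le> 1" using \<open>finite S\<close> card_le_Suc0_iff_eq
      by (metis One_nat_def finite_Int)
  qed
  ultimately show ?thesis by blast
qed

lemma no_rainbow:
  assumes "rainbow_circuit_free E P" "finite S" "S \<subseteq> E" "\<forall>C\<in>P. card (S \<inter> C) \<le> 1"
    "is_cycle S vs"
  shows False
proof -
  have "graphic_circuit E (cycle_edges vs)"
    unfolding graphic_circuit_def using assms(3,5) is_cycle_mono by blast
  moreover have "\<forall>X\<in>P. card (cycle_edges vs \<inter> X) \<le> 1"
  proof
    fix X assume "X \<in> P"
    have "card (cycle_edges vs \<inter> X) \<le> card (S \<inter> X)"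
      using cycle_edges_sub[OF assms(5)] assms(2) by (intro card_mono) auto
    then show "card (cycle_edges vs \<inter> X) \<le> 1" using assms(4) \<open>X \<in> P\<close> by fastforce
  qed
  ultimately show False using assms(1) unfolding rainbow_circuit_free_def by blast
qed

lemma edge_pair: "u \<noteq> u' \<Longrightarrow> e = {u, u'} \<Longrightarrow> v \<in> e \<Longrightarrow> w \<in> e \<Longrightarrow> v \<noteq> w \<Longrightarrow> e = {v, w}"
  by auto

theorem theorem9:
  fixes V :: "'a set" and E :: "'a set set"
  assumes "simple_graph V E"
    and "\<exists>P. partition_on E P \<and> rainbow_circuit_free E P \<and> (\<forall>X\<in>P. card X \<le> 2)"
  shows "sparse23 V E"
proof -
  obtain P where P: "partition_on E P" and rf: "rainbow_circuit_free E P"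
    and sz: "\<forall>X\<in>P. card X \<le> 2" using assms(2) by blast
  have finV: "finite V" and edgesE: "\<forall>e\<in>E. \<exists>u v. u \<noteq> v \<and> u \<in> V \<and> v \<in> V \<and> e = {u, v}"
    using assms(1) unfolding simple_graph_def by auto
  have finE: "finite E" using edges_finite[OF finV edgesE] .
  have UP: "\<Union>P = E" using P partition_onD1 by blast
  have finP: "finite P"
  proof -
    have "P \<subseteq> Pow E" using UP by blast
    then show ?thesis using finE by (meson finite_Pow_iff finite_subset)
  qed
  have finC: "finite C" if "C \<in> P" for C using UP that finE by (meson Sup_upper finite_subset)
  show ?thesis
    unfolding sparse23_def
  proof (intro allI impI)
    fix X assume XA: "X \<subseteq> V \<and> 2 \<le> card X"
    then have XV: "X \<subseteq> V" and n2: "2 \<le> card X" by auto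
    have finX: "finite X" using XV finV by (metis finite_subset)
    define n where "n = card X"
    define FX where "FX = {e\<in>E. e \<subseteq> X}"
    show "card FX \<le> 2 * card X - 3"
    proof (rule ccontr)
      assume "\<not> card FX \<le> 2 * card X - 3"
      then have big: "2 * n - 2 \<le> card FX" using n2 unfolding n_def by linarith
      have FXsub: "FX \<subseteq> E" unfolding FX_def by blast
      have finFX: "finite FX" using finE FXsub by (metis finite_subset)
      define Q where "Q = {C\<in>P. C \<inter> FX \<noteq> {}}"
      have QP: "Q \<subseteq> P" unfolding Q_def by blast
      have finQ: "finite Q" using finP QP by (metis finite_subset)
      have Qne: "Q \<noteq> {}"
      proof -
        have "FX \<noteq> {}" using big n2 finFX unfolding n_def by auto
        then obtain e where e: "e \<in> FX" by blast
        then obtain C where "C \<in> P" "e \<in> C" using UP FXsub by blast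
        then have "C \<in> Q" using e unfolding Q_def by blast
        then show ?thesis by blast
      qed
      have kpos: "card Q \<ge> 1" using finQ Qne by (simp add: Suc_leI card_gt_0_iff)
      have key: False if finY: "finite Y" and ZE: "Z \<subseteq> E"
        and edZ: "\<forall>e\<in>Z. \<exists>u v. u \<noteq> v \<and> u \<in> Y \<and> v \<in> Y \<and> e = {u, v}"
        and meet: "\<forall>C\<in>Q. C \<inter> Z \<noteq> {}" and cYQ: "card Y \<le> card Q" for Y Z
      proof -
        obtain S where S: "S \<subseteq> Z" "S \<subseteq> E" "finite S" "card S = card Q"
          "\<forall>C\<in>P. card (S \<inter> C) \<le> 1"
          using transversal[OF P QP finQ meet] by blast
        have Sne: "S \<noteq> {}" using S(4) kpos by auto
        have edS: "\<forall>e\<in>S. \<exists>u v. u \<noteq> v \<and> u \<in> Y \<and> v \<in> Y \<and> e = {u, v}"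
          using edZ S(1) by blast
        obtain vs where "is_cycle S vs"
          using cycle_exists[OF finY edS Sne] cYQ S(4) by auto
        then show False using no_rainbow[OF rf S(3) S(2) S(5)] by blast
      qed
      have edFX: "\<forall>e\<in>FX. \<exists>u v. u \<noteq> v \<and> u \<in> X \<and> v \<in> X \<and> e = {u, v}"
      proof
        fix e assume e: "e \<in> FX"
        have "e \<in> E" using e unfolding FX_def by blast
        then obtain u v where "u \<noteq> v" "e = {u, v}" using bspec[OF edgesE \<open>e \<in> E\<close>] by (elim exE conjE) blast
        moreover have "e \<subseteq> X" using e unfolding FX_def by blast
        ultimately show "\<exists>u v. u \<noteq> v \<and> u \<in> X \<and> v \<in> X \<and> e = {u, v}" by auto
      qed
      have meetFX: "\<forall>C\<in>Q. C \<inter> FX \<noteq> {}" unfolding Q_def by blast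
      have kle: "card Q \<le> n - 1"
      proof (rule ccontr)
        assume "\<not> card Q \<le> n - 1"
        then have "card X \<le> card Q" unfolding n_def by linarith
        then show False using key[OF finX FXsub edFX meetFX] by blast
      qed
      have FXU: "FX = (\<Union>C\<in>Q. C \<inter> FX)"
      proof
        show "FX \<subseteq> (\<Union>C\<in>Q. C \<inter> FX)"
        proof
          fix e assume e: "e \<in> FX"
          then obtain C where "C \<in> P" "e \<in> C" using UP FXsub by blast
          then show "e \<in> (\<Union>C\<in>Q. C \<inter> FX)" using e unfolding Q_def by blast
        qed
      qed blast
      have sumle: "card FX \<le> (\<Sum>C\<in>Q. card (C \<inter> FX))"
        using card_UN_le[OF finQ, of "\<lambda>C. C \<inter> FX"] FXU by simp
      have each: "card (C \<inter> FX) \<le> 2" if "C \<in> Q" for C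
      proof -
        have "card (C \<inter> FX) \<le> card C" using finC that QP by (intro card_mono) auto
        then show ?thesis using sz that QP by fastforce
      qed
      have sum2: "(\<Sum>C\<in>Q. card (C \<inter> FX)) \<le> card Q * 2"
        using sum_bounded_above[of Q "\<lambda>C. card (C \<inter> FX)" 2] each by simp
      have keq: "card Q = n - 1" using big sumle sum2 kle n2 unfolding n_def by linarith
      have full: "C \<subseteq> FX \<and> card C = 2" if CQ: "C \<in> Q" for C
      proof (cases "card (C \<inter> FX) = 2")
        case True
        have "card (C \<inter> FX) \<le> card C" using finC CQ QP by (intro card_mono) auto
        then have c2: "card C = 2" using True sz CQ QP by fastforce
        have "C \<inter> FX = C" using True c2 finC CQ QP by (metis Int_lower1 card_subset_eq subsetD)
        then show ?thesis using c2 by blast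
      next
        case False
        then have c1: "card (C \<inter> FX) \<le> 1" using each CQ by fastforce
        have "(\<Sum>D\<in>Q. card (D \<inter> FX)) = card (C \<inter> FX) + (\<Sum>D\<in>Q - {C}. card (D \<inter> FX))"
          using finQ CQ by (simp add: sum.remove)
        moreover have "(\<Sum>D\<in>Q - {C}. card (D \<inter> FX)) \<le> card (Q - {C}) * 2"
          using sum_bounded_above[of "Q - {C}" "\<lambda>D. card (D \<inter> FX)" 2] each by simp
        moreover have "card (Q - {C}) = card Q - 1" using finQ CQ by simp
        ultimately have "card FX \<le> 1 + (card Q - 1) * 2" using sumle c1 by linarith
        then show ?thesis using big keq n2 kpos unfolding n_def by linarith
      qed
      have star: "\<exists>C\<in>Q. \<forall>e\<in>C. v \<in> e" if vX: "v \<in> X" for v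
      proof (rule ccontr)
        assume "\<not> (\<exists>C\<in>Q. \<forall>e\<in>C. v \<in> e)"
        then have nb: "\<forall>C\<in>Q. \<exists>e\<in>C. v \<notin> e" by blast
        define Z where "Z = {e\<in>E. e \<subseteq> X - {v}}"
        have ZE: "Z \<subseteq> E" unfolding Z_def by blast
        have edZ: "\<forall>e\<in>Z. \<exists>u w. u \<noteq> w \<and> u \<in> X - {v} \<and> w \<in> X - {v} \<and> e = {u, w}"
        proof
          fix e assume e: "e \<in> Z"
          have "e \<in> E" using e unfolding Z_def by blast
          then obtain u w where "u \<noteq> w" "e = {u, w}" using bspec[OF edgesE \<open>e \<in> E\<close>] by (elim exE conjE) blast
          moreover have "e \<subseteq> X - {v}" using e unfolding Z_def by blast
          ultimately show "\<exists>u w. u \<noteq> w \<and> u \<in> X - {v} \<and> w \<in> X - {v} \<and> e = {u, w}" by auto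
        qed
        have meetZ: "\<forall>C\<in>Q. C \<inter> Z \<noteq> {}"
        proof
          fix C assume CQ: "C \<in> Q"
          then obtain e where e: "e \<in> C" "v \<notin> e" using nb by blast
          have "e \<in> FX" using full[OF CQ] e by blast
          then have "e \<in> Z" using e unfolding FX_def Z_def by blast
          then show "C \<inter> Z \<noteq> {}" using e by blast
        qed
        have "card (X - {v}) = n - 1" using finX vX unfolding n_def by simp
        then have "card (X - {v}) \<le> card Q" using keq by simp
        moreover have "finite (X - {v})" using finX by simp
        ultimately show False using key[OF _ ZE edZ meetZ] by blast
      qed
      have ch: "\<forall>v\<in>X. \<exists>C. C \<in> Q \<and> (\<forall>e\<in>C. v \<in> e)" using star by blast
      obtain g where g: "\<forall>v\<in>X. g v \<in> Q \<and> (\<forall>e\<in>g v. v \<in> e)"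
        using bchoice[OF ch] by (elim exE) blast
      have "inj_on g X"
      proof (rule inj_onI)
        fix v w assume v: "v \<in> X" and w: "w \<in> X" and gvw: "g v = g w"
        show "v = w"
        proof (rule ccontr)
          assume vw: "v \<noteq> w"
          define C where "C = g v"
          have CQ: "C \<in> Q" using g v unfolding C_def by blast
          have allv: "\<forall>e\<in>C. v \<in> e" and allw: "\<forall>e\<in>C. w \<in> e"
            using g v w gvw unfolding C_def by auto
          obtain e1 e2 where C12: "C = {e1, e2}" "e1 \<noteq> e2"
            using full[OF CQ] card_2_iff by metis
          have "e1 \<in> FX" "e2 \<in> FX" using full[OF CQ] C12 by auto
          obtain u1 u1' where u1: "u1 \<noteq> u1'" "e1 = {u1, u1'}"
            using bspec[OF edFX \<open>e1 \<in> FX\<close>] by (elim exE conjE) blast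
          obtain u2 u2' where u2: "u2 \<noteq> u2'" "e2 = {u2, u2'}"
            using bspec[OF edFX \<open>e2 \<in> FX\<close>] by (elim exE conjE) blast
          have "v \<in> e1" "w \<in> e1" "v \<in> e2" "w \<in> e2" using allv allw C12 by auto
          then have "e1 = {v, w}" "e2 = {v, w}"
            using edge_pair[OF u1] edge_pair[OF u2] vw by blast+
          then show False using C12 by simp
        qed
      qed
      then have "card X \<le> card Q" using g finQ by (intro card_inj_on_le) auto
      then show False using keq n2 unfolding n_def by linarith
    qed
  qed
qed

end
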